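(* Let $G=(V,E)$ be an undirected graph with $n$ vertices in which every vertex has degree at most $d$, and let $\pi$ be a uniformly random ordering of $V$. (i) For a $\delta$-prefix $P$ with $\delta=O(\log(n)/d)$, the longest directed path in the priority DAG of $G[P]$ has length $O(\log n)$ with high probability. (ii) For a $\delta$-prefix $P$ with $\delta\le 1/d$, the longest directed path in the priority DAG of $G[P]$ has length $O(\log n/\log\log n)$ with high probability.
   Context: For $0<\delta\le1$, the $\delta$-prefix of $V$ with respect to $\pi$ is the set of the $\delta|V|$ earliest vertices in $\pi$; $G[P]$ is the induced subgraph. The priority DAG directs each edge from its earlier endpoint to its later endpoint in $\pi$. "With high probability" means with probability at least $1-1/n^{c}$ for any constant $c$, affecting the constants in the asymptotic notation. *)

theory Defs
  imports "HOL-Probability.Probability" "HOL-Combinatorics.Multiset_Permutations"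
begin

definition ugraph :: "nat set \<Rightarrow> (nat \<Rightarrow> nat \<Rightarrow> bool) \<Rightarrow> bool" where
  "ugraph V E \<longleftrightarrow> finite V \<and>
     (\<forall>u v. E u v \<longrightarrow> u \<in> V \<and> v \<in> V \<and> u \<noteq> v \<and> E v u)"

definition max_degree_le :: "nat set \<Rightarrow> (nat \<Rightarrow> nat \<Rightarrow> bool) \<Rightarrow> nat \<Rightarrow> bool" where
  "max_degree_le V E d \<longleftrightarrow> (\<forall>u\<in>V. card {v \<in> V. E u v} \<le> d)"

definition random_ordering :: "nat set \<Rightarrow> nat list pmf" where
  "random_ordering V = pmf_of_set (permutations_of_set V)"

definition earlier :: "nat list \<Rightarrow> nat \<Rightarrow> nat \<Rightarrow> bool" where
  "earlier \<pi> u v \<longleftrightarrow> (\<exists>i j. i < j \<and> j < length \<pi> \<and> \<pi> ! i = u \<and> \<pi> ! j = v)"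

definition delta_prefix :: "nat list \<Rightarrow> real \<Rightarrow> nat set" where
  "delta_prefix \<pi> \<delta> = set (take (nat \<lfloor>\<delta> * real (length \<pi>)\<rfloor>) \<pi>)"

text \<open>A directed path (as vertex list) in the priority DAG of G[P]: all vertices in P,
  consecutive vertices adjacent in G, and directed from earlier to later in pi.\<close>
definition dag_path :: "(nat \<Rightarrow> nat \<Rightarrow> bool) \<Rightarrow> nat list \<Rightarrow> nat set \<Rightarrow> nat list \<Rightarrow> bool" where
  "dag_path E \<pi> P p \<longleftrightarrow> p \<noteq> [] \<and> set p \<subseteq> P \<and>
     (\<forall>i. Suc i < length p \<longrightarrow> E (p ! i) (p ! Suc i) \<and> earlier \<pi> (p ! i) (p ! Suc i))"

definition longest_dag_path :: "(nat \<Rightarrow> nat \<Rightarrow> bool) \<Rightarrow> nat list \<Rightarrow> nat set \<Rightarrow> nat" where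
  "longest_dag_path E \<pi> P = Max (insert 0 {length p - 1 | p. dag_path E \<pi> P p})"

end

theory Submission
  imports Defs
begin


fun emb :: "nat \<Rightarrow> nat list \<Rightarrow> nat list \<Rightarrow> bool" where
  "emb m [] xs = True"
| "emb m (y#ys) [] = False"
| "emb m (y#ys) (x#xs) = (0 < m \<and> (if x = y then emb (m-1) ys xs else emb (m-1) (y#ys) xs))"

lemma emb_set: "emb m p xs \<Longrightarrow> set p \<subseteq> set xs"
  by (induction m p xs rule: emb.induct) (auto split: if_splits)

fun idx :: "nat list \<Rightarrow> nat \<Rightarrow> nat" where
  "idx [] u = 0" | "idx (x#xs) u = (if x = u then 0 else Suc (idx xs u))"

lemma idx_nth: "distinct xs \<Longrightarrow> i < length xs \<Longrightarrow> idx xs (xs ! i) = i"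
proof (induction xs arbitrary: i)
  case Nil then show ?case by simp
next
  case (Cons x xs) then show ?case
    by (cases i) (auto simp: nth_mem)
qed

lemma earlier_idx: "distinct \<pi> \<Longrightarrow> earlier \<pi> u v \<Longrightarrow> idx \<pi> u < idx \<pi> v"
  unfolding earlier_def using idx_nth by auto

lemma emb_of_sorted:
  assumes "distinct \<pi>" "set p \<subseteq> set (take m \<pi>)" "sorted_wrt (\<lambda>u v. idx \<pi> u < idx \<pi> v) p"
  shows "emb m p \<pi>"
  using assms
proof (induction \<pi> arbitrary: m p)
  case Nil then show ?case by (cases p) auto
next
  case (Cons x xs)
  show ?case
  proof (cases p)
    case Nil then show ?thesis by simp
  next
    case (Cons y ys)
    have m0: "0 < m" using Cons.prems(2) \<open>p = y#ys\<close> by (cases m) auto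
    have notx: "\<forall>z\<in>set ys. z \<noteq> x"
      using Cons.prems(3) \<open>p = y#ys\<close> by auto
    show ?thesis
    proof (cases "x = y")
      case True
      have "set ys \<subseteq> set (take (m-1) xs)"
        using Cons.prems(2) \<open>p = y#ys\<close> notx m0 by (cases m) auto
      moreover have "sorted_wrt (\<lambda>u v. idx xs u < idx xs v) ys"
      proof (rule sorted_wrt_mono_rel[of ys "\<lambda>u v. idx (x#xs) u < idx (x#xs) v"])
        show "sorted_wrt (\<lambda>u v. idx (x#xs) u < idx (x#xs) v) ys" using Cons.prems(3) \<open>p = y#ys\<close> by simp
        fix u v assume "u \<in> set ys" "v \<in> set ys" "idx (x#xs) u < idx (x#xs) v"
        then show "idx xs u < idx xs v" using notx by (auto split: if_splits)
      qed
      ultimately have "emb (m-1) ys xs" using Cons.IH Cons.prems(1) by auto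
      then show ?thesis using True m0 \<open>p = y#ys\<close> by simp
    next
      case False
      have notx2: "\<forall>z\<in>set p. z \<noteq> x" using notx False \<open>p = y#ys\<close> by auto
      have "set p \<subseteq> set (take (m-1) xs)"
        using Cons.prems(2) notx2 m0 by (cases m) auto
      moreover have "sorted_wrt (\<lambda>u v. idx xs u < idx xs v) p"
      proof (rule sorted_wrt_mono_rel[of p "\<lambda>u v. idx (x#xs) u < idx (x#xs) v"])
        show "sorted_wrt (\<lambda>u v. idx (x#xs) u < idx (x#xs) v) p" using Cons.prems(3) by simp
        fix u v assume "u \<in> set p" "v \<in> set p" "idx (x#xs) u < idx (x#xs) v"
        then show "idx xs u < idx xs v" using notx2 by (auto split: if_splits)
      qed
      ultimately have "emb (m-1) p xs" using Cons.IH Cons.prems(1) by auto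
      then show ?thesis using False m0 \<open>p = y#ys\<close> by simp
    qed
  qed
qed




lemma arith_choose:
  fixes m' n j :: nat
  assumes "m' \<le> n" "j \<le> n"
  shows "(m' choose j) * fact (n - j) + (n - j) * ((m' choose Suc j) * fact (n - Suc j))
         = (Suc m' choose Suc j) * fact (Suc n - Suc j)"
proof (cases "j < n")
  case True
  have "(n - j) * fact (n - Suc j) = (fact (n - j) :: nat)"
  proof -
    obtain k where k: "n - j = Suc k" "n - Suc j = k" using True
      by (metis Suc_diff_Suc diff_Suc_1)
    show ?thesis unfolding k by (simp add: fact_Suc)
  qed
  then have "(n - j) * ((m' choose Suc j) * fact (n - Suc j)) = (m' choose Suc j) * fact (n - j)"
    by (metis mult.left_commute)
  then show ?thesis by (simp only: binomial_Suc_Suc diff_Suc_Suc add_mult_distrib)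
next
  case False
  then have "j = n" using assms by simp
  then show ?thesis using assms by simp
qed

lemma count_emb:
  assumes "finite A" "distinct p" "set p \<subseteq> A" "m \<le> card A"
  shows "card {\<pi> \<in> permutations_of_set A. emb m p \<pi>} = (m choose length p) * fact (card A - length p)"
  using assms
proof (induction "card A" arbitrary: A m p)
  case 0
  then have "A = {}" by simp
  with 0 show ?case by auto
next
  case (Suc n)
  show ?case
  proof (cases p)
    case Nil
    then show ?thesis using Suc.prems by simp
  next
    case (Cons y ys)
    show ?thesis
    proof (cases m)
      case 0
      have "\<And>\<pi>. \<not> emb 0 (y#ys) \<pi>" by (case_tac \<pi>) auto
      then show ?thesis using 0 Cons by simp
    next
      case (Suc m')
      have Ane: "A \<noteq> {}" using Suc.hyps(2) by auto
      define f where "f x = card {xs \<in> permutations_of_set (A - {x}). emb m p (x#xs)}" for x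
      have ev: "{\<pi> \<in> permutations_of_set A. emb m p \<pi>} =
          (\<Union>x\<in>A. (\<lambda>xs. x # xs) ` {xs \<in> permutations_of_set (A - {x}). emb m p (x#xs)})"
        by (subst permutations_of_set_nonempty[OF Ane]) auto
      have "card {\<pi> \<in> permutations_of_set A. emb m p \<pi>} = (\<Sum>x\<in>A. card ((\<lambda>xs. x # xs) ` {xs \<in> permutations_of_set (A - {x}). emb m p (x#xs)}))"
        unfolding ev by (rule card_UN_disjoint) (use Suc.prems in auto)
      also have "\<dots> = (\<Sum>x\<in>A. f x)"
        unfolding f_def by (intro sum.cong refl card_image) (auto simp: inj_on_def)
      finally have c1: "card {\<pi> \<in> permutations_of_set A. emb m p \<pi>} = (\<Sum>x\<in>A. f x)" .
      have yA: "y \<in> A" using Suc.prems Cons by auto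
      have cA: "card (A - {y}) = n" using Suc.hyps(2) yA Suc.prems(1) by simp
      have fy: "f y = (m' choose length ys) * fact (n - length ys)"
      proof -
        have "f y = card {xs \<in> permutations_of_set (A - {y}). emb m' ys xs}"
          unfolding f_def using Cons Suc by simp
        also have "\<dots> = (m' choose length ys) * fact (card (A - {y}) - length ys)"
          by (rule Suc.hyps(1)) (use Suc.prems Cons \<open>m = Suc m'\<close> cA in auto)
        finally show ?thesis using cA by simp
      qed
      have fz: "f x = 0" if "x \<in> set ys" for x
      proof -
        have "x \<noteq> y" using that Suc.prems(2) Cons by auto
        have "\<not> emb m p (x#xs)" if "xs \<in> permutations_of_set (A - {x})" for xs
        proof
          assume "emb m p (x#xs)"
          then have "emb m' p xs" using \<open>x \<noteq> y\<close> Cons \<open>m = Suc m'\<close> by simp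
          then have "set p \<subseteq> set xs" by (rule emb_set)
          then show False using that \<open>x \<in> set ys\<close> Cons by (auto simp: permutations_of_set_def)
        qed
        then show ?thesis unfolding f_def by simp
      qed
      have fo: "f x = (m' choose length p) * fact (n - length p)" if "x \<in> A - set p" for x
      proof -
        have xA: "x \<in> A" "x \<notin> set p" using that by auto
        have cx: "card (A - {x}) = n" using Suc.hyps(2) xA Suc.prems(1) by simp
        have "f x = card {xs \<in> permutations_of_set (A - {x}). emb m' p xs}"
          unfolding f_def using Cons Suc xA by (auto intro!: arg_cong[where f=card])
        also have "\<dots> = (m' choose length p) * fact (card (A - {x}) - length p)"
          by (rule Suc.hyps(1)) (use Suc.prems Cons \<open>m = Suc m'\<close> cx xA in auto)
        finally show ?thesis using cx by simp
      qed
      have "(\<Sum>x\<in>A. f x) = f y + (\<Sum>x\<in>A - {y}. f x)"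
        using Suc.prems(1) yA by (simp add: sum.remove)
      also have "(\<Sum>x\<in>A - {y}. f x) = (\<Sum>x\<in>A - set p. f x)"
        by (rule sum.mono_neutral_cong_right) (use Suc.prems(1) Cons fz in auto)
      also have "\<dots> = (\<Sum>x\<in>A - set p. (m' choose length p) * fact (n - length p))"
        by (rule sum.cong) (use fo in auto)
      also have "\<dots> = card (A - set p) * ((m' choose length p) * fact (n - length p))" by simp
      also have "card (A - set p) = n - length ys"
        using Suc.prems Suc.hyps(2) Cons by (simp add: card_Diff_subset distinct_card)
      finally have c2: "(\<Sum>x\<in>A. f x) = (m' choose length ys) * fact (n - length ys)
          + (n - length ys) * ((m' choose Suc (length ys)) * fact (n - Suc (length ys)))"
        using fy Cons by simp
      have jn: "length ys \<le> n"
      proof -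
        have "length p \<le> card A" using Suc.prems
          by (metis card_mono distinct_card)
        then show ?thesis using Cons Suc.hyps(2) by simp
      qed
      show ?thesis unfolding c1 c2 using arith_choose[of m' n "length ys"] jn Suc.prems(4) Suc.hyps(2) Cons \<open>m = Suc m'\<close>
        by simp
    qed
  qed
qed




lemma choose_suc: "Suc J * (m choose Suc J) = (m - J) * (m choose J)"
  using binomial_absorb_comp binomial_absorption by presburger

lemma ratio_bound:
  assumes "m \<le> n" "J \<le> n"
  shows "real (m choose J) * fact J * fact (n - J) / fact n \<le> (real m / real n) ^ J"
  using assms(2)
proof (induction J)
  case 0 then show ?case by simp
next
  case (Suc J)
  have Jn: "J < n" using Suc.prems by simp
  have e1: "real (m choose Suc J) * fact (Suc J) = real (m - J) * (real (m choose J) * fact J)"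
  proof -
    have "real (m choose Suc J) * fact (Suc J) = real (Suc J * (m choose Suc J)) * fact J"
      by (simp add: fact_Suc algebra_simps)
    also have "\<dots> = real ((m - J) * (m choose J)) * fact J" by (simp only: choose_suc)
    finally show ?thesis by simp
  qed
  have e2: "(fact (n - J) :: real) = real (n - J) * fact (n - Suc J)"
  proof -
    obtain k where k: "n - J = Suc k" "n - Suc J = k" using Jn
      by (metis Suc_diff_Suc diff_Suc_1)
    show ?thesis unfolding k by (simp add: fact_Suc)
  qed
  have pos: "real (n - J) > 0" using Jn by simp
  have "real (m choose Suc J) * fact (Suc J) * fact (n - Suc J) / fact n
      = (real (m choose J) * fact J * fact (n - J) / fact n) * (real (m - J) / real (n - J))"
    using pos unfolding e2 e1 by (simp add: field_simps)
  also have "\<dots> \<le> (real m / real n) ^ J * (real m / real n)"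
  proof (rule mult_mono)
    show "real (m choose J) * fact J * fact (n - J) / fact n \<le> (real m / real n) ^ J"
      using Suc by simp
    show "real (m - J) / real (n - J) \<le> real m / real n"
    proof (cases "J \<le> m")
      case True
      have "real J * real m \<le> real J * real n" using assms(1) by (intro mult_left_mono) auto
      then have "real (m - J) * real n \<le> real m * real (n - J)"
        using True Jn assms(1) by (simp add: of_nat_diff algebra_simps)
      then show ?thesis using pos Jn by (simp add: divide_simps)
    next
      case False then show ?thesis by simp
    qed
  qed auto
  finally show ?case by (simp add: mult.commute)
qed

lemma prob_term_bound:
  assumes "m \<le> n" "J \<le> n" "0 < n"
  shows "real (m choose J) * fact (n - J) / fact n \<le> (real m / real n) ^ J / fact J"
proof -
  have "real (m choose J) * fact (n - J) / fact n = (real (m choose J) * fact J * fact (n - J) / fact n) / fact J"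
    by simp
  also have "\<dots> \<le> (real m / real n) ^ J / fact J"
    by (intro divide_right_mono ratio_bound assms) auto
  finally show ?thesis .
qed

definition walks :: "nat set \<Rightarrow> (nat \<Rightarrow> nat \<Rightarrow> bool) \<Rightarrow> nat \<Rightarrow> nat list set" where
  "walks V E k = {p. length p = Suc k \<and> set p \<subseteq> V \<and> (\<forall>i. Suc i < length p \<longrightarrow> E (p!i) (p!Suc i))}"

lemma walks_finite: "finite V \<Longrightarrow> finite (walks V E k)"
  by (rule finite_subset[OF _ finite_lists_length_eq[of V "Suc k"]]) (auto simp: walks_def)

lemma walks_card:
  assumes "ugraph V E" "max_degree_le V E d"
  shows "card (walks V E k) \<le> card V * d ^ k"
proof (induction k)
  case 0
  have "walks V E 0 = (\<lambda>v. [v]) ` V"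
  proof
    show "walks V E 0 \<subseteq> (\<lambda>v. [v]) ` V"
    proof
      fix p assume "p \<in> walks V E 0"
      then obtain v where "p = [v]" "v \<in> V" unfolding walks_def
        by (cases p) auto
      then show "p \<in> (\<lambda>v. [v]) ` V" by auto
    qed
  qed (auto simp: walks_def)
  then show ?case by (simp add: card_image_le assms(1)[unfolded ugraph_def])
next
  case (Suc k)
  have fin: "finite V" using assms(1) by (simp add: ugraph_def)
  have sub: "walks V E (Suc k) \<subseteq> (\<Union>q\<in>walks V E k. (\<lambda>v. v # q) ` {v \<in> V. E (hd q) v})"
  proof
    fix p assume p: "p \<in> walks V E (Suc k)"
    then obtain v q where pq: "p = v # q" unfolding walks_def by (cases p) auto
    have all: "\<forall>i. Suc i < length p \<longrightarrow> E (p!i) (p!Suc i)" using p unfolding walks_def by auto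
    have "E (q!i) (q!Suc i)" if "Suc i < length q" for i
      using all[rule_format, of "Suc i"] that unfolding pq by simp
    then have q: "q \<in> walks V E k"
      using p unfolding pq walks_def by auto
    have "E v (q ! 0)" using p unfolding pq walks_def by (auto dest: spec[of _ 0])
    then have "E (hd q) v" using assms(1) q unfolding ugraph_def walks_def
      by (cases q) auto
    moreover have "v \<in> V" using p pq unfolding walks_def by auto
    ultimately show "p \<in> (\<Union>q\<in>walks V E k. (\<lambda>v. v # q) ` {v \<in> V. E (hd q) v})"
      using q pq by auto
  qed
  have "card (walks V E (Suc k)) \<le> card (\<Union>q\<in>walks V E k. (\<lambda>v. v # q) ` {v \<in> V. E (hd q) v})"
    by (rule card_mono[OF _ sub]) (use fin walks_finite in auto)
  also have "\<dots> \<le> (\<Sum>q\<in>walks V E k. card ((\<lambda>v. v # q) ` {v \<in> V. E (hd q) v}))"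
    by (rule card_UN_le) (rule walks_finite[OF fin])
  also have "\<dots> \<le> (\<Sum>q\<in>walks V E k. d)"
  proof (rule sum_mono)
    fix q assume q: "q \<in> walks V E k"
    then have "hd q \<in> V" unfolding walks_def by (cases q) auto
    then have "card {v \<in> V. E (hd q) v} \<le> d" using assms(2) unfolding max_degree_le_def by auto
    then show "card ((\<lambda>v. v # q) ` {v \<in> V. E (hd q) v}) \<le> d"
      using card_image_le[of "{v \<in> V. E (hd q) v}" "\<lambda>v. v # q"] fin by auto
  qed
  also have "\<dots> = card (walks V E k) * d" by simp
  also have "\<dots> \<le> card V * d ^ k * d" using Suc by (rule mult_right_mono) simp
  also have "\<dots> = card V * d ^ Suc k" by (simp only: power_Suc2 mult.assoc)
  finally show ?case .
qed

lemma pow_fact_le_exp: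
  fixes x :: real assumes "0 \<le> x"
  shows "x ^ n / fact n \<le> exp x"
proof -
  have "(\<Sum>i\<in>{n}. x ^ i /\<^sub>R fact i) \<le> (\<Sum>i. x ^ i /\<^sub>R fact i)"
    by (rule sum_le_suminf) (use summable_exp_generic[of x] assms in auto)
  then show ?thesis by (simp add: exp_def divide_inverse mult.commute)
qed




lemma sorted_idx_of_path:
  assumes "distinct \<pi>" "\<forall>i. Suc i < length p \<longrightarrow> earlier \<pi> (p ! i) (p ! Suc i)"
  shows "sorted_wrt (\<lambda>u v. idx \<pi> u < idx \<pi> v) p"
proof (subst sorted_wrt_iff_nth_Suc_transp)
  show "transp (\<lambda>u v. idx \<pi> u < idx \<pi> v)" by (auto simp: transp_def)
  show "\<forall>i. Suc i < length p \<longrightarrow> idx \<pi> (p ! i) < idx \<pi> (p ! Suc i)"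
    using assms earlier_idx by blast
qed

lemma sorted_idx_distinct:
  assumes "sorted_wrt (\<lambda>u v. idx \<pi> u < idx \<pi> v) p"
  shows "distinct p"
proof -
  have "p ! i \<noteq> p ! j" if "i < length p" "j < length p" "i \<noteq> j" for i j
  proof (cases "i < j")
    case True
    then show ?thesis using assms that unfolding sorted_wrt_iff_nth_less by fastforce
  next
    case False
    then have "j < i" using that by simp
    then show ?thesis using assms that unfolding sorted_wrt_iff_nth_less by fastforce
  qed
  then show ?thesis by (simp add: distinct_conv_nth)
qed

lemma key:
  assumes ug: "ugraph V E" and md: "max_degree_le V E d" and d1: "1 \<le> d"
    and dpos: "0 < \<delta>" and d1': "\<delta> \<le> 1" and J1: "1 \<le> J" and n0: "0 < card V"
  shows "measure_pmf.prob (random_ordering V) {\<pi>. longest_dag_path E \<pi> (delta_prefix \<pi> \<delta>) < J}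
         \<ge> 1 - real (card V) * (real d * \<delta>) ^ J / fact J"
proof -
  define n where "n = card V"
  define S where "S = permutations_of_set V"
  define m where "m = nat \<lfloor>\<delta> * real n\<rfloor>"
  have finV: "finite V" using ug by (simp add: ugraph_def)
  have Sne: "S \<noteq> {}" "finite S" using finV by (auto simp: S_def)
  have cS: "card S = fact n" using finV by (simp add: S_def n_def)
  have mn: "m \<le> n"
  proof -
    have "\<delta> * real n \<le> real n" using d1' mult_right_mono[of \<delta> 1 "real n"] by simp
    then have "\<lfloor>\<delta> * real n\<rfloor> \<le> int n" by linarith
    then show ?thesis unfolding m_def by simp
  qed
  have mle: "real m \<le> \<delta> * real n"
  proof -
    have "0 \<le> \<delta> * real n" using dpos by simp
    then show ?thesis unfolding m_def by linarith
  qed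
  have pref: "delta_prefix \<pi> \<delta> = set (take m \<pi>)" if "\<pi> \<in> S" for \<pi>
    using that length_finite_permutations_of_set[of \<pi> V] unfolding S_def delta_prefix_def m_def n_def by simp
  define Bad where "Bad = {\<pi>\<in>S. \<exists>p. dag_path E \<pi> (set (take m \<pi>)) p \<and> J \<le> length p}"
  define W where "W = walks V E (J - 1) \<inter> {p. distinct p}"
  have finW: "finite W" unfolding W_def using walks_finite[OF finV] by auto
  have claim1: "S - Bad \<subseteq> {\<pi>. longest_dag_path E \<pi> (delta_prefix \<pi> \<delta>) < J}"
  proof
    fix \<pi> assume a: "\<pi> \<in> S - Bad"
    define L where "L = {length p - 1 | p. dag_path E \<pi> (delta_prefix \<pi> \<delta>) p}"
    have "\<forall>x\<in>L. x < J"
      using a pref[of \<pi>] unfolding L_def Bad_def by fastforce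
    then have "\<forall>x\<in>insert 0 L. x < J" using J1 by auto
    moreover then have "finite (insert 0 L)" by (meson finite_lessThan finite_subset lessThan_iff subsetI)
    ultimately have "Max (insert 0 L) < J" by simp
    then show "\<pi> \<in> {\<pi>. longest_dag_path E \<pi> (delta_prefix \<pi> \<delta>) < J}"
      unfolding longest_dag_path_def L_def by simp
  qed
  have claim2: "Bad \<subseteq> (\<Union>p\<in>W. {\<pi>\<in>S. emb m p \<pi>})"
  proof
    fix \<pi> assume "\<pi> \<in> Bad"
    then obtain q where \<pi>S: "\<pi> \<in> S" and q: "dag_path E \<pi> (set (take m \<pi>)) q" "J \<le> length q"
      unfolding Bad_def by blast
    have dpi: "distinct \<pi>" "set \<pi> = V" using \<pi>S by (auto simp: S_def permutations_of_set_def)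
    define p where "p = take J q"
    have lp: "length p = J" using q(2) by (simp add: p_def)
    have sp: "set p \<subseteq> set (take m \<pi>)" using q(1) unfolding p_def dag_path_def
      by (meson order_trans set_take_subset)
    have ch: "\<forall>i. Suc i < length p \<longrightarrow> E (p ! i) (p ! Suc i) \<and> earlier \<pi> (p ! i) (p ! Suc i)"
      using q(1) lp q(2) unfolding p_def dag_path_def by auto
    have so: "sorted_wrt (\<lambda>u v. idx \<pi> u < idx \<pi> v) p"
      using sorted_idx_of_path[OF dpi(1)] ch by blast
    have "emb m p \<pi>" by (rule emb_of_sorted[OF dpi(1) sp so])
    moreover have "p \<in> W"
    proof -
      have "set p \<subseteq> V" using sp dpi(2) by (meson order_trans set_take_subset)
      then show ?thesis unfolding W_def walks_def using lp J1 ch sorted_idx_distinct[OF so] by auto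
    qed
    ultimately show "\<pi> \<in> (\<Union>p\<in>W. {\<pi>\<in>S. emb m p \<pi>})" using \<pi>S by blast
  qed
  have finB: "finite Bad" using Sne unfolding Bad_def by auto
  have BS: "Bad \<subseteq> S" unfolding Bad_def by auto
  have prob: "measure_pmf.prob (random_ordering V) {\<pi>. longest_dag_path E \<pi> (delta_prefix \<pi> \<delta>) < J}
        \<ge> 1 - real (card Bad) / fact n"
  proof -
    have "card (S - Bad) \<le> card (S \<inter> {\<pi>. longest_dag_path E \<pi> (delta_prefix \<pi> \<delta>) < J})"
      by (rule card_mono) (use Sne claim1 in auto)
    moreover have "card (S - Bad) = card S - card Bad" using BS finB by (simp add: card_Diff_subset)
    moreover have "card Bad \<le> card S" using BS Sne by (simp add: card_mono)
    ultimately have "real (card S) - real (card Bad) \<le> real (card (S \<inter> {\<pi>. longest_dag_path E \<pi> (delta_prefix \<pi> \<delta>) < J}))"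
      by linarith
    then have "1 - real (card Bad) / fact n \<le> real (card (S \<inter> {\<pi>. longest_dag_path E \<pi> (delta_prefix \<pi> \<delta>) < J})) / card S"
      using cS by (simp add: divide_simps)
    then show ?thesis
      unfolding random_ordering_def S_def[symmetric] measure_pmf_of_set[OF Sne] by simp
  qed
  show ?thesis
  proof (cases "J \<le> n")
    case False
    have "W = {}"
    proof (rule ccontr)
      assume "W \<noteq> {}"
      then obtain p where "p \<in> W" by blast
      then have "distinct p" "set p \<subseteq> V" "length p = J" using J1 unfolding W_def walks_def by auto
      then have "J \<le> n" unfolding n_def by (metis card_mono distinct_card finV)
      then show False using False by simp
    qed
    then have "Bad = {}" using claim2 by auto
    moreover have "0 \<le> real (card V) * (real d * \<delta>) ^ J / fact J" using dpos by simp
    ultimately show ?thesis using prob by simp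
  next
    case True
    have "card Bad \<le> card (\<Union>p\<in>W. {\<pi>\<in>S. emb m p \<pi>})"
      by (rule card_mono[OF _ claim2]) (use finW Sne in auto)
    also have "\<dots> \<le> (\<Sum>p\<in>W. card {\<pi>\<in>S. emb m p \<pi>})" by (rule card_UN_le[OF finW])
    also have "\<dots> = (\<Sum>p\<in>W. (m choose J) * fact (n - J))"
    proof (rule sum.cong[OF refl])
      fix p assume "p \<in> W"
      then have "distinct p" "set p \<subseteq> V" "length p = J" using J1 unfolding W_def walks_def by auto
      then show "card {\<pi>\<in>S. emb m p \<pi>} = (m choose J) * fact (n - J)"
        using count_emb[OF finV, of p m] mn unfolding S_def n_def by simp
    qed
    also have "\<dots> = card W * ((m choose J) * fact (n - J))" by simp
    also have "\<dots> \<le> (n * d ^ (J - 1)) * ((m choose J) * fact (n - J))"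
    proof (rule mult_right_mono)
      have "card W \<le> card (walks V E (J - 1))" unfolding W_def
        by (rule card_mono) (auto simp: walks_finite[OF finV])
      also have "\<dots> \<le> n * d ^ (J - 1)" using walks_card[OF ug md] unfolding n_def by blast
      finally show "card W \<le> n * d ^ (J - 1)" .
    qed simp
    finally have cB: "real (card Bad) \<le> real n * real d ^ (J - 1) * (real (m choose J) * fact (n - J))"
      by (metis (mono_tags, lifting) of_nat_fact of_nat_le_iff of_nat_mult of_nat_power)
    have "real (card Bad) / fact n \<le> real n * real d ^ (J - 1) * (real (m choose J) * fact (n - J) / fact n)"
      using cB by (simp add: divide_right_mono)
    also have "\<dots> \<le> real n * real d ^ (J - 1) * ((real m / real n) ^ J / fact J)"
      by (intro mult_left_mono prob_term_bound mn True) (use n0 n_def in auto)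
    also have "\<dots> \<le> real n * real d ^ (J - 1) * (\<delta> ^ J / fact J)"
    proof (intro mult_left_mono divide_right_mono power_mono)
      show "real m / real n \<le> \<delta>" using mle n0 n_def by (simp add: divide_simps mult.commute)
    qed auto
    also have "\<dots> \<le> real n * (real d * \<delta>) ^ J / fact J"
    proof -
      have "real d ^ (J - 1) \<le> real d ^ J" using d1 by (intro power_increasing) auto
      then have "real d ^ (J - 1) * \<delta> ^ J \<le> real d ^ J * \<delta> ^ J"
        using dpos by (intro mult_right_mono) auto
      then have "real n * (real d ^ (J - 1) * \<delta> ^ J) \<le> real n * (real d ^ J * \<delta> ^ J)"
        by (intro mult_left_mono) auto
      then show ?thesis by (simp add: power_mult_distrib divide_right_mono mult.assoc)
    qed
    finally have fin: "real (card Bad) / fact n \<le> real (card V) * (real d * \<delta>) ^ J / fact J"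
      by (simp add: n_def)
    show ?thesis using prob fin by linarith
  qed
qed




lemma fact_lower:
  assumes "1 \<le> J"
  shows "1 / (fact J :: real) \<le> exp (real J) / real J ^ J"
proof -
  have "real J ^ J / fact J \<le> exp (real J)" by (rule pow_fact_le_exp) simp
  moreover have "real J ^ J > 0" using assms by simp
  ultimately show ?thesis by (simp add: divide_simps mult.commute)
qed

lemma arith1:
  fixes n x a c :: real and J :: nat
  assumes n4: "4 \<le> n" and a: "0 < a" and c: "0 < c" and x: "0 \<le> x" "x \<le> a * ln n"
    and J: "(exp 2 * a + c + 1) * ln n \<le> real J" "1 \<le> J"
  shows "n * x ^ J / fact J \<le> 1 / n powr c"
proof -
  define C where "C = exp 2 * a + c + 1"
  define L where "L = ln n"
  have L1: "1 < L"
  proof -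
    have "exp 1 < n" using exp_le n4 by linarith
    then have "ln (exp 1) < ln n" using n4 by (subst ln_less_cancel_iff) auto
    then show ?thesis by (simp add: L_def)
  qed
  have Jpos: "0 < real J" using J by simp
  define t where "t = x * exp 1 / real J"
  have t0: "0 \<le> t" using x Jpos by (simp add: t_def)
  have "x ^ J / fact J = x ^ J * (1 / fact J)" by simp
  also have "\<dots> \<le> x ^ J * (exp (real J) / real J ^ J)"
    by (intro mult_left_mono fact_lower J) (use x in auto)
  also have "\<dots> = t ^ J"
    unfolding t_def by (simp add: power_divide power_mult_distrib exp_of_nat_mult[symmetric] mult.commute)
  finally have s1: "x ^ J / fact J \<le> t ^ J" .
  have "t \<le> exp (-1)"
  proof -
    have "x * exp 1 \<le> a * L * exp 1" using x by (simp add: L_def)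
    also have "a * L * exp 1 = exp 2 * a * L * exp (-1)"
      by (simp add: exp_minus field_simps power2_eq_square flip: exp_add)
    also have "\<dots> \<le> C * L * exp (-1)"
      using a c L1 by (intro mult_right_mono) (auto simp: C_def intro!: mult_right_mono)
    also have "\<dots> \<le> real J * exp (-1)" using J by (simp add: C_def L_def)
    finally show ?thesis using Jpos by (simp add: t_def divide_simps mult.commute)
  qed
  then have "t ^ J \<le> exp (-1) ^ J" by (intro power_mono t0)
  also have "\<dots> = exp (- real J)" by (simp add: exp_of_nat_mult[symmetric])
  also have "\<dots> \<le> exp (- (C * L))" using J by (simp add: C_def L_def)
  also have "\<dots> = n powr (- C)" using n4 by (simp add: powr_def L_def)
  finally have s2: "x ^ J / fact J \<le> n powr (- C)" using s1 by linarith
  have "n * x ^ J / fact J \<le> n * n powr (- C)" using s2 n4 by (simp add: mult_left_mono divide_simps)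
  also have "\<dots> = n powr (1 - C)" using n4 by (simp add: powr_diff powr_minus divide_simps)
  also have "\<dots> \<le> n powr (- c)" using n4 a by (intro powr_mono) (auto simp: C_def)
  also have "\<dots> = 1 / n powr c" by (simp add: powr_minus divide_simps)
  finally show ?thesis .
qed




lemma ln_half_bound: fixes l :: real assumes "0 < l" shows "ln l \<le> l / 2"
proof -
  have "ln (l / 2) \<le> l / 2 - 1" using assms by (intro ln_le_minus_one) auto
  moreover have "ln (2::real) \<le> 2 - 1" by (intro ln_le_minus_one) auto
  moreover have "ln l = ln (l / 2) + ln 2" using assms by (simp add: ln_div)
  ultimately show ?thesis by linarith
qed

lemma arith2:
  fixes n x c :: real and J :: nat
  assumes n4: "4 \<le> n" and c: "0 < c" and x: "0 \<le> x" "x \<le> 1"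
    and J: "(2 * c + 3) * ln n / ln (ln n) \<le> real J" "1 \<le> J"
  shows "n * x ^ J / fact J \<le> 1 / n powr c"
proof -
  define C where "C = 2 * c + 3"
  define L where "L = ln n"
  define l where "l = ln L"
  have L1: "1 < L"
  proof -
    have "exp 1 < n" using exp_le n4 by linarith
    then have "ln (exp 1) < ln n" using n4 by (subst ln_less_cancel_iff) auto
    then show ?thesis by (simp add: L_def)
  qed
  have l0: "0 < l" using L1 by (simp add: l_def)
  have lL: "l < L" using L1 by (simp add: l_def)
  define y where "y = C * L / l"
  have yC: "C \<le> y"
  proof -
    have "C * 1 \<le> C * (L / l)" using lL l0 c by (intro mult_left_mono) (auto simp: C_def)
    then show ?thesis by (simp add: y_def)
  qed
  have e3: "exp 1 \<le> C" using exp_le c by (simp add: C_def)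
  have ye: "exp 1 \<le> y" using yC e3 by linarith
  have ypos: "0 < y" using ye by (meson exp_gt_zero less_le_trans)
  have yJ: "y \<le> real J" using J by (simp add: y_def C_def L_def l_def)
  have Cpos: "0 < C" using c by (simp add: C_def)
  have "ln (exp 1) \<le> ln C" using e3 by (intro ln_mono) auto
  then have lnC: "1 \<le> ln C" by simp
  have "ln y = ln (C * L) - ln l" unfolding y_def using Cpos L1 l0 by (simp add: ln_div)
  also have "ln (C * L) = ln C + ln L" using Cpos L1 by (simp add: ln_mult)
  finally have lny: "ln y = ln C + l - ln l" by (simp add: l_def)
  have key: "(c + 1) * L \<le> y * (ln y - 1)"
  proof -
    have "ln y - 1 \<ge> l / 2" using lny lnC ln_half_bound[OF l0] by linarith
    then have "y * (ln y - 1) \<ge> y * (l / 2)" using ypos by (intro mult_left_mono) auto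
    moreover have "y * (l / 2) = C * L / 2" using l0 by (simp add: y_def)
    moreover have "(c + 1) * L \<le> C * L / 2" using L1 by (simp add: C_def field_simps)
    ultimately show ?thesis by linarith
  qed
  have Jpos: "0 < real J" using J by simp
  have "exp ((c + 1) * L) \<le> exp (y * (ln y - 1))" using key by simp
  also have "exp (y * (ln y - 1)) = (y / exp 1) powr y"
    using ypos by (simp add: powr_def ln_div algebra_simps)
  also have "\<dots> \<le> (y / exp 1) powr real J"
    using ye yJ by (intro powr_mono) auto
  also have "\<dots> \<le> (real J / exp 1) powr real J"
    using ypos yJ by (intro powr_mono2 divide_right_mono) auto
  also have "\<dots> = (real J / exp 1) ^ J" using Jpos by (simp add: powr_realpow)
  also have "\<dots> = real J ^ J / exp (real J)"
    by (simp add: power_divide exp_of_nat_mult[symmetric])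
  also have "\<dots> \<le> fact J"
  proof -
    have "real J ^ J / fact J \<le> exp (real J)" by (rule pow_fact_le_exp) simp
    then show ?thesis by (simp add: divide_simps mult.commute)
  qed
  finally have F: "n powr (c + 1) \<le> fact J"
    using n4 by (simp add: powr_def L_def mult.commute)
  have "n * x ^ J / fact J \<le> n / fact J"
  proof -
    have "x ^ J \<le> 1" using x by (simp add: power_le_one)
    then show ?thesis using n4 by (intro divide_right_mono) (auto intro: mult_left_le)
  qed
  also have "\<dots> \<le> n / n powr (c + 1)"
    using F n4 by (intro divide_left_mono) auto
  also have "\<dots> = 1 / n powr c" using n4 by (simp add: powr_add)
  finally show ?thesis .
qed




lemma subset_event:
  assumes "0 \<le> B"
  shows "{\<pi>. longest_dag_path E \<pi> (delta_prefix \<pi> \<delta>) < nat \<lfloor>B\<rfloor> + 1}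
     \<subseteq> {\<pi>. real (longest_dag_path E \<pi> (delta_prefix \<pi> \<delta>)) \<le> B}"
proof
  fix \<pi> assume "\<pi> \<in> {\<pi>. longest_dag_path E \<pi> (delta_prefix \<pi> \<delta>) < nat \<lfloor>B\<rfloor> + 1}"
  then have "longest_dag_path E \<pi> (delta_prefix \<pi> \<delta>) \<le> nat \<lfloor>B\<rfloor>" by simp
  then have "real (longest_dag_path E \<pi> (delta_prefix \<pi> \<delta>)) \<le> real (nat \<lfloor>B\<rfloor>)" by simp
  also have "\<dots> \<le> B" using assms by linarith
  finally show "\<pi> \<in> {\<pi>. real (longest_dag_path E \<pi> (delta_prefix \<pi> \<delta>)) \<le> B}" by simp
qed

lemma main_bound:
  assumes ug: "ugraph V E" and md: "max_degree_le V E d" and d1: "1 \<le> d"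
    and dpos: "0 < \<delta>" and d1': "\<delta> \<le> 1" and n4: "4 \<le> card V" and B: "0 \<le> B"
    and ar: "real (card V) * (real d * \<delta>) ^ (nat \<lfloor>B\<rfloor> + 1) / fact (nat \<lfloor>B\<rfloor> + 1) \<le> 1 / real (card V) powr c"
  shows "measure_pmf.prob (random_ordering V)
           {\<pi>. real (longest_dag_path E \<pi> (delta_prefix \<pi> \<delta>)) \<le> B} \<ge> 1 - 1 / real (card V) powr c"
proof -
  have "1 - 1 / real (card V) powr c \<le> 1 - real (card V) * (real d * \<delta>) ^ (nat \<lfloor>B\<rfloor> + 1) / fact (nat \<lfloor>B\<rfloor> + 1)"
    using ar by linarith
  also have "\<dots> \<le> measure_pmf.prob (random_ordering V) {\<pi>. longest_dag_path E \<pi> (delta_prefix \<pi> \<delta>) < nat \<lfloor>B\<rfloor> + 1}"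
    by (rule key[OF ug md d1 dpos d1']) (use n4 in auto)
  also have "\<dots> \<le> measure_pmf.prob (random_ordering V) {\<pi>. real (longest_dag_path E \<pi> (delta_prefix \<pi> \<delta>)) \<le> B}"
    by (rule measure_pmf.finite_measure_mono[OF subset_event[OF B]]) simp
  finally show ?thesis .
qed

theorem corollary4:
  shows "(\<forall>a > (0::real). \<forall>c > (0::real). \<exists>C > (0::real). \<exists>N::nat.
            \<forall>(V::nat set) E (d::nat) (\<delta>::real).
              ugraph V E \<and> max_degree_le V E d \<and> d \<ge> 1 \<and> card V \<ge> N \<and>
              0 < \<delta> \<and> \<delta> \<le> 1 \<and> \<delta> \<le> a * ln (real (card V)) / real d \<longrightarrow>
              measure_pmf.prob (random_ordering V)
                {\<pi>. real (longest_dag_path E \<pi> (delta_prefix \<pi> \<delta>)) \<le> C * ln (real (card V))}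
              \<ge> 1 - 1 / real (card V) powr c)
       \<and> (\<forall>c > (0::real). \<exists>C > (0::real). \<exists>N::nat.
            \<forall>(V::nat set) E (d::nat) (\<delta>::real).
              ugraph V E \<and> max_degree_le V E d \<and> d \<ge> 1 \<and> card V \<ge> N \<and>
              0 < \<delta> \<and> \<delta> \<le> 1 / real d \<longrightarrow>
              measure_pmf.prob (random_ordering V)
                {\<pi>. real (longest_dag_path E \<pi> (delta_prefix \<pi> \<delta>))
                       \<le> C * ln (real (card V)) / ln (ln (real (card V)))}
              \<ge> 1 - 1 / real (card V) powr c)"
proof (intro conjI allI impI)
  fix a c :: real assume a: "0 < a" and c: "0 < c"
  show "\<exists>C > (0::real). \<exists>N::nat.
            \<forall>(V::nat set) E (d::nat) (\<delta>::real).
              ugraph V E \<and> max_degree_le V E d \<and> d \<ge> 1 \<and> card V \<ge> N \<and>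
              0 < \<delta> \<and> \<delta> \<le> 1 \<and> \<delta> \<le> a * ln (real (card V)) / real d \<longrightarrow>
              measure_pmf.prob (random_ordering V)
                {\<pi>. real (longest_dag_path E \<pi> (delta_prefix \<pi> \<delta>)) \<le> C * ln (real (card V))}
              \<ge> 1 - 1 / real (card V) powr c"
  proof (intro exI[of _ "exp 2 * a + c + 1"] conjI exI[of _ 4] allI impI)
    show "0 < exp 2 * a + c + 1" using a c by (simp add: add_pos_pos)
    fix V E d \<delta> assume h: "ugraph V E \<and> max_degree_le V E d \<and> d \<ge> (1::nat) \<and> card V \<ge> 4 \<and>
              0 < \<delta> \<and> \<delta> \<le> 1 \<and> \<delta> \<le> a * ln (real (card V)) / real d"
    define n where "n = real (card V)"
    define B where "B = (exp 2 * a + c + 1) * ln n"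
    have n4: "4 \<le> n" using h by (simp add: n_def)
    have B0: "0 \<le> B" using a c n4 by (simp add: B_def add_pos_pos less_imp_le)
    have dp: "0 < real d" using h by simp
    have "\<delta> \<le> a * ln n / real d" using h by (simp add: n_def)
    then have dx: "real d * \<delta> \<le> a * ln n" using dp by (simp add: pos_le_divide_eq mult.commute)
    have "n * (real d * \<delta>) ^ (nat \<lfloor>B\<rfloor> + 1) / fact (nat \<lfloor>B\<rfloor> + 1) \<le> 1 / n powr c"
    proof (rule arith1[OF n4 a c _ dx])
      show "0 \<le> real d * \<delta>" using h by simp
      show "(exp 2 * a + c + 1) * ln n \<le> real (nat \<lfloor>B\<rfloor> + 1)" using B0 unfolding B_def[symmetric] by linarith
    qed simp
    then show "measure_pmf.prob (random_ordering V)
                {\<pi>. real (longest_dag_path E \<pi> (delta_prefix \<pi> \<delta>)) \<le> (exp 2 * a + c + 1) * ln (real (card V))}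
              \<ge> 1 - 1 / real (card V) powr c"
      using main_bound[of V E d \<delta> B c] h B0 unfolding B_def n_def by auto
  qed
next
  fix c :: real assume c: "0 < c"
  show "\<exists>C > (0::real). \<exists>N::nat.
            \<forall>(V::nat set) E (d::nat) (\<delta>::real).
              ugraph V E \<and> max_degree_le V E d \<and> d \<ge> 1 \<and> card V \<ge> N \<and>
              0 < \<delta> \<and> \<delta> \<le> 1 / real d \<longrightarrow>
              measure_pmf.prob (random_ordering V)
                {\<pi>. real (longest_dag_path E \<pi> (delta_prefix \<pi> \<delta>))
                       \<le> C * ln (real (card V)) / ln (ln (real (card V)))}
              \<ge> 1 - 1 / real (card V) powr c"
  proof (intro exI[of _ "2 * c + 3"] conjI exI[of _ 4] allI impI)
    show "0 < 2 * c + 3" using c by simp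
    fix V E d \<delta> assume h: "ugraph V E \<and> max_degree_le V E d \<and> d \<ge> (1::nat) \<and> card V \<ge> 4 \<and>
              0 < \<delta> \<and> \<delta> \<le> 1 / real d"
    define n where "n = real (card V)"
    define B where "B = (2 * c + 3) * ln n / ln (ln n)"
    have n4: "4 \<le> n" using h by (simp add: n_def)
    have L1: "1 < ln n"
    proof -
      have "exp 1 < n" using exp_le n4 by linarith
      then have "ln (exp 1) < ln n" using n4 by (subst ln_less_cancel_iff) auto
      then show ?thesis by simp
    qed
    have B0: "0 \<le> B" using c L1 by (simp add: B_def)
    have d1': "\<delta> \<le> 1"
    proof -
      have "1 / real d \<le> 1" using h by simp
      then show ?thesis using h by linarith
    qed
    have dp: "0 < real d" using h by simp
    have "\<delta> \<le> 1 / real d" using h by simp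
    then have dx: "real d * \<delta> \<le> 1" using dp by (simp add: pos_le_divide_eq mult.commute)
    have "n * (real d * \<delta>) ^ (nat \<lfloor>B\<rfloor> + 1) / fact (nat \<lfloor>B\<rfloor> + 1) \<le> 1 / n powr c"
    proof (rule arith2[OF n4 c _ dx])
      show "0 \<le> real d * \<delta>" using h by simp
      show "(2 * c + 3) * ln n / ln (ln n) \<le> real (nat \<lfloor>B\<rfloor> + 1)" using B0 unfolding B_def[symmetric] by linarith
    qed simp
    then show "measure_pmf.prob (random_ordering V)
                {\<pi>. real (longest_dag_path E \<pi> (delta_prefix \<pi> \<delta>))
                       \<le> (2 * c + 3) * ln (real (card V)) / ln (ln (real (card V)))}
              \<ge> 1 - 1 / real (card V) powr c"
      using main_bound[of V E d \<delta> B c] h B0 d1' unfolding B_def n_def by auto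
  qed
qed


end
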